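(* Let $f:\mathbb{R}^d\to\mathbb{R}$ be convex and differentiable with $L$-Lipschitz gradient ($\|\nabla f(x)-\nabla f(y)\|\le L\|x-y\|$ for all $x,y$), and suppose $X^*\neq\emptyset$. Run the Proximal Bundle Method with parameter $\beta\in(0,1)$ and constant stepsize $\rho_k=\rho>0$. Let $D^2=\sup_k\mathrm{dist}(x_k,X^* )^2$ and assume $0<D^2<\infty$. Then for any $0<\epsilon\le f(x_0)-f^*$, the number of descent steps taken before an $\epsilon$-minimizer is found is at most $$N:=\frac{2\rho D^2}{\beta\epsilon}+\left\lceil\frac{2\log\left(\frac{f(x_0)-f^*}{\rho D^2}\right)}{\beta}\right\rceil_+,$$ and the number of null steps taken before then is at most $$\frac{16(L+\rho)^3}{(1-\beta)^2\rho^3}\left(N+1\right).$$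
   Context: Throughout, $f:\mathbb{R}^d\to\mathbb{R}$ is a proper closed convex function attaining its minimum $f^*=\inf f$ on the nonempty set $X^*=\{x: f(x)=f^*\}$; $\mathrm{dist}(x,S)=\inf_{y\in S}\|x-y\|$; $\partial f(x)$ is the convex subdifferential; $\lceil a\rceil_+=\max\{\lceil a\rceil,0\}$. A subgradient oracle returns, for any $x$, the value $f(x)$ and some $g(x)\in\partial f(x)$. Proximal Bundle Method: fix $\beta\in(0,1)$, $x_0=z_0\in\mathbb{R}^d$, $g_0=g(x_0)$, and the initial model $f_0(x)=f(x_0)+\langle g_0,x-x_0\rangle$. At iteration $k\ge0$, given a convex model $f_k:\mathbb{R}^d\to\mathbb{R}$ and stepsize $\rho_k>0$, compute $z_{k+1}=\operatorname{argmin}_z f_k(z)+\frac{\rho_k}{2}\|z-x_k\|^2$. If $\beta(f(x_k)-f_k(z_{k+1}))\le f(x_k)-f(z_{k+1})$, iteration $k$ is a descent step and $x_{k+1}=z_{k+1}$; otherwise it is a null step and $x_{k+1}=x_k$. Then a new convex model $f_{k+1}$ and stepsize $\rho_{k+1}$ are chosen satisfying, with $g_{k+1}=g(z_{k+1})$ and $s_{k+1}=\rho_k(x_k-z_{k+1})$: (1) $f_{k+1}(x)\le f(x)$ for all $x$; (2) $f_{k+1}(x)\ge f(z_{k+1})+\langle g_{k+1},x-z_{k+1}\rangle$ for all $x$; (3) if iteration $k$ was a null step, $f_{k+1}(x)\ge f_k(z_{k+1})+\langle s_{k+1},x-z_{k+1}\rangle$ for all $x$; (4) if iteration $k$ was a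 null step, $\rho_{k+1}\ge\rho_k$. An $\epsilon$-minimizer is a point $x$ with $f(x)-f^*\le\epsilon$. *)

theory Defs
  imports "HOL-Analysis.Analysis"
begin

definition subdiff :: "('a::real_inner \<Rightarrow> real) \<Rightarrow> 'a \<Rightarrow> 'a set" where
  "subdiff f x = {g. \<forall>y. f y \<ge> f x + inner g (y - x)}"

definition ceil_plus :: "real \<Rightarrow> int" where
  "ceil_plus a = max (ceiling a) 0"

definition pbm_descent :: "('a \<Rightarrow> real) \<Rightarrow> real \<Rightarrow> (nat \<Rightarrow> 'a) \<Rightarrow> (nat \<Rightarrow> 'a)
    \<Rightarrow> (nat \<Rightarrow> 'a \<Rightarrow> real) \<Rightarrow> nat \<Rightarrow> bool" where
  "pbm_descent f \<beta> x z fm k \<longleftrightarrow>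
     \<beta> * (f (x k) - fm k (z (Suc k))) \<le> f (x k) - f (z (Suc k))"

definition is_pbm_run :: "('a::real_inner \<Rightarrow> real) \<Rightarrow> ('a \<Rightarrow> 'a) \<Rightarrow> real \<Rightarrow> real
    \<Rightarrow> (nat \<Rightarrow> 'a) \<Rightarrow> (nat \<Rightarrow> 'a) \<Rightarrow> (nat \<Rightarrow> 'a \<Rightarrow> real) \<Rightarrow> bool" where
  "is_pbm_run f g \<beta> \<rho> x z fm \<longleftrightarrow>
     z 0 = x 0 \<and>
     fm 0 = (\<lambda>y. f (x 0) + inner (g (x 0)) (y - x 0)) \<and>
     (\<forall>k. convex_on UNIV (fm k)) \<and>
     (\<forall>k. \<forall>y. fm k (z (Suc k)) + \<rho> / 2 * (norm (z (Suc k) - x k))\<^sup>2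
                 \<le> fm k y + \<rho> / 2 * (norm (y - x k))\<^sup>2) \<and>
     (\<forall>k. x (Suc k) = (if pbm_descent f \<beta> x z fm k then z (Suc k) else x k)) \<and>
     (\<forall>k y. fm (Suc k) y \<le> f y) \<and>
     (\<forall>k y. fm (Suc k) y \<ge> f (z (Suc k)) + inner (g (z (Suc k))) (y - z (Suc k))) \<and>
     (\<forall>k y. \<not> pbm_descent f \<beta> x z fm k \<longrightarrow>
        fm (Suc k) y \<ge> fm k (z (Suc k)) + inner (\<rho> *\<^sub>R (x k - z (Suc k))) (y - z (Suc k)))"

end

theory Submission imports Defs begin


lemma descent_lemma:
  fixes f :: "'a::euclidean_space \<Rightarrow> real" and grad :: "'a \<Rightarrow> 'a"
  assumes grad: "\<forall>y. (f has_derivative (\<lambda>h. inner (grad y) h)) (at y)"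
    and lip: "\<forall>u v. norm (grad u - grad v) \<le> L * norm (u - v)"
    and L0: "L \<ge> 0"
  shows "f y \<le> f z + inner (grad z) (y - z) + L * (norm (y - z))\<^sup>2"
proof -
  define d where "d = y - z"
  define \<psi> where "\<psi> t = f (z + t *\<^sub>R d) - t * inner (grad z) d" for t
  have der: "(\<psi> has_derivative (\<lambda>h. inner (grad (z + t *\<^sub>R d)) (h *\<^sub>R d) - h * inner (grad z) d)) (at t)" for t
  proof -
    have 1: "((\<lambda>t. z + t *\<^sub>R d) has_derivative (\<lambda>h. h *\<^sub>R d)) (at t)"
      by (auto intro!: derivative_eq_intros)
    have 2: "((\<lambda>t. f (z + t *\<^sub>R d)) has_derivative (\<lambda>h. inner (grad (z + t *\<^sub>R d)) (h *\<^sub>R d))) (at t)"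
      using has_derivative_compose[OF 1 grad[rule_format, of "z + t *\<^sub>R d"]] by (simp add: o_def)
    show ?thesis unfolding \<psi>_def
      by (rule has_derivative_diff[OF 2]) (auto intro!: derivative_eq_intros)
  qed
  have cont: "continuous_on {0..1} \<psi>"
    using der by (meson has_derivative_continuous continuous_at_imp_continuous_on)
  obtain t where t: "t \<in> {0<..<1}" and le: "norm (\<psi> 1 - \<psi> 0) \<le> norm (inner (grad (z + t *\<^sub>R d)) ((1-0) *\<^sub>R d) - (1-0) * inner (grad z) d)"
    using mvt_general[of 0 1 \<psi>, OF _ cont der] by auto
  have "norm (inner (grad (z + t *\<^sub>R d)) ((1-0) *\<^sub>R d) - (1-0) * inner (grad z) d)
      = \<bar>inner (grad (z + t *\<^sub>R d) - grad z) d\<bar>" by (simp add: inner_diff_left)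
  also have "\<dots> \<le> norm (grad (z + t *\<^sub>R d) - grad z) * norm d" by (rule Cauchy_Schwarz_ineq2)
  also have "\<dots> \<le> L * norm (t *\<^sub>R d) * norm d"
    by (rule mult_right_mono[OF _ norm_ge_zero]) (use lip[rule_format, of "z + t *\<^sub>R d" z] in simp)
  also have "\<dots> \<le> L * norm d * norm d"
  proof -
    have "norm (t *\<^sub>R d) \<le> norm d" using t by (simp add: mult_left_le_one_le)
    hence "L * norm (t *\<^sub>R d) \<le> L * norm d" using L0 by (rule mult_left_mono)
    thus ?thesis by (rule mult_right_mono) simp
  qed
  finally have "\<psi> 1 - \<psi> 0 \<le> L * (norm d)\<^sup>2" using le by (simp add: power2_eq_square)
  thus ?thesis unfolding \<psi>_def d_def by simp
qed



lemma eps_subgrad: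
  fixes s g :: "'a::real_inner"
  assumes h: "\<forall>d. inner (s - g) d \<le> e + L * (norm d)\<^sup>2" and L0: "L \<ge> 0"
  shows "(norm (s - g))\<^sup>2 \<le> 4 * L * e"
proof (cases "L > 0")
  case True
  define d where "d = (1 / (2*L)) *\<^sub>R (s - g)"
  have "inner (s - g) d = (norm (s-g))\<^sup>2 / (2*L)"
    by (simp add: d_def power2_norm_eq_inner)
  moreover have "L * (norm d)\<^sup>2 = (norm (s-g))\<^sup>2 / (4*L)"
  proof -
    have nd: "norm d = norm (s-g) / (2*L)" unfolding d_def norm_scaleR using True by simp
    show ?thesis unfolding nd using True by (simp add: power2_eq_square field_simps)
  qed
  ultimately have "(norm (s-g))\<^sup>2 / (2*L) \<le> e + (norm (s-g))\<^sup>2 / (4*L)" using h by metis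
  hence "(norm (s-g))\<^sup>2 / (4*L) \<le> e" by simp
  thus ?thesis using True by (simp add: field_simps)
next
  case False
  hence L: "L = 0" using L0 by simp
  have e0: "e \<ge> 0" using h[rule_format, of 0] by simp
  show ?thesis
  proof (rule ccontr)
    assume "\<not> ?thesis"
    hence pos: "(norm (s-g))\<^sup>2 > 0" using L by simp
    define d where "d = ((e+1) / (norm (s-g))\<^sup>2) *\<^sub>R (s - g)"
    have "inner (s - g) d = e + 1" using pos by (simp add: d_def power2_norm_eq_inner)
    thus False using h[rule_format, of d] L by simp
  qed
qed

lemma norm_add_scale:
  fixes a b :: "'a::real_inner"
  shows "(norm (a + t *\<^sub>R b))\<^sup>2 = (norm a)\<^sup>2 + 2 * t * inner a b + t\<^sup>2 * (norm b)\<^sup>2"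
  unfolding power2_norm_eq_inner
  by (simp add: inner_add_left inner_add_right inner_commute power2_eq_square algebra_simps)

lemma prox_opt:
  fixes h :: "'a::real_inner \<Rightarrow> real"
  assumes cvx: "convex_on UNIV h"
    and opt: "\<forall>y. h z + \<rho>/2 * (norm (z - x))\<^sup>2 \<le> h y + \<rho>/2 * (norm (y - x))\<^sup>2"
    and rho: "\<rho> > 0"
  shows "h y \<ge> h z + inner (\<rho> *\<^sub>R (x - z)) (y - z)"
proof -
  define A where "A = h z - h y - \<rho> * inner (z - x) (y - z)"
  define B where "B = \<rho>/2 * (norm (y - z))\<^sup>2"
  have B0: "B \<ge> 0" using rho by (simp add: B_def)
  have key: "A \<le> t * B" if t: "0 < t" "t \<le> 1" for t
  proof -
    define w where "w = (1 - t) *\<^sub>R z + t *\<^sub>R y"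
    have hw: "h w \<le> (1 - t) * h z + t * h y" unfolding w_def
      using convex_onD[OF cvx, of t z y] t by simp
    have wx: "w - x = (z - x) + t *\<^sub>R (y - z)" by (simp add: w_def algebra_simps)
    have nw: "(norm (w - x))\<^sup>2 = (norm (z - x))\<^sup>2 + 2 * t * inner (z - x) (y - z) + t\<^sup>2 * (norm (y - z))\<^sup>2"
      unfolding wx by (rule norm_add_scale)
    have "h z + \<rho>/2 * (norm (z - x))\<^sup>2 \<le> h w + \<rho>/2 * (norm (w - x))\<^sup>2" using opt by blast
    hence "h z \<le> (1 - t) * h z + t * h y + \<rho> * t * inner (z - x) (y - z) + t * (t * B)"
      using hw unfolding nw B_def by (simp add: algebra_simps power2_eq_square)
    hence "t * A \<le> t * (t * B)" unfolding A_def by (simp add: algebra_simps)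
    thus ?thesis using t by simp
  qed
  have "A \<le> 0"
  proof (rule ccontr)
    assume "\<not> A \<le> 0"
    hence Ap: "A > 0" by simp
    define t where "t = min 1 (A / (2 * (B + 1)))"
    have t0: "0 < t" "t \<le> 1" using Ap B0 by (auto simp: t_def)
    have "t \<le> A / (2 * (B + 1))" by (simp add: t_def)
    hence "t * B \<le> A / (2 * (B + 1)) * B" using B0 by (rule mult_right_mono)
    also have "\<dots> < A" using Ap B0 by (simp add: field_simps add_nonneg_pos)
    finally show False using key[OF t0] by simp
  qed
  thus ?thesis unfolding A_def by (simp add: inner_diff_left inner_diff_right algebra_simps)
qed



locale pbm =
  fixes f :: "'a::euclidean_space \<Rightarrow> real"
    and grad g :: "'a \<Rightarrow> 'a"
    and L \<beta> \<rho> :: real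
    and x z :: "nat \<Rightarrow> 'a"
    and fm :: "nat \<Rightarrow> 'a \<Rightarrow> real"
  assumes cvx: "convex_on UNIV f"
    and grad: "\<forall>y. (f has_derivative (\<lambda>h. inner (grad y) h)) (at y)"
    and lip: "\<forall>u v. norm (grad u - grad v) \<le> L * norm (u - v)"
    and subg: "\<forall>y. g y \<in> subdiff f y"
    and beta: "0 < \<beta>" "\<beta> < 1"
    and rho: "\<rho> > 0"
    and run: "is_pbm_run f g \<beta> \<rho> x z fm"
begin

abbreviation "desc k \<equiv> pbm_descent f \<beta> x z fm k"

lemma L0: "L \<ge> 0"
proof -
  obtain b :: 'a where b: "b \<in> Basis" using nonempty_Basis by blast
  hence "norm b = 1" by simp
  thus ?thesis using lip[rule_format, of b 0] by (metis mult.right_neutral diff_zero norm_ge_zero order_trans)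
qed

lemma smooth: "f y \<le> f u + inner (grad u) (y - u) + L * (norm (y - u))\<^sup>2"
  using descent_lemma[OF grad lip L0] .

lemma subg_ineq: "f y \<ge> f u + inner (g u) (y - u)"
  using subg unfolding subdiff_def by blast

lemma g_eq: "g u = grad u"
proof -
  have "\<forall>d. inner (g u - grad u) d \<le> 0 + L * (norm d)\<^sup>2"
  proof
    fix d
    have "f (u + d) \<ge> f u + inner (g u) d" using subg_ineq[of u "u + d"] by simp
    moreover have "f (u + d) \<le> f u + inner (grad u) d + L * (norm d)\<^sup>2" using smooth[of "u+d" u] by simp
    ultimately show "inner (g u - grad u) d \<le> 0 + L * (norm d)\<^sup>2" by (simp add: inner_diff_left)
  qed
  from eps_subgrad[OF this L0] show ?thesis by simp
qed

lemma grad_ineq: "f y \<ge> f u + inner (grad u) (y - u)"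
  using subg_ineq g_eq by metis

lemma z0: "z 0 = x 0" and fm0: "fm 0 = (\<lambda>y. f (x 0) + inner (g (x 0)) (y - x 0))"
  and fmcvx: "convex_on UNIV (fm k)"
  and opt: "fm k (z (Suc k)) + \<rho> / 2 * (norm (z (Suc k) - x k))\<^sup>2 \<le> fm k y + \<rho> / 2 * (norm (y - x k))\<^sup>2"
  and xsuc: "x (Suc k) = (if desc k then z (Suc k) else x k)"
  and fmle_suc: "fm (Suc k) y \<le> f y"
  and cut: "fm (Suc k) y \<ge> f (z (Suc k)) + inner (g (z (Suc k))) (y - z (Suc k))"
  and agg: "\<not> desc k \<Longrightarrow> fm (Suc k) y \<ge> fm k (z (Suc k)) + inner (\<rho> *\<^sub>R (x k - z (Suc k))) (y - z (Suc k))"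
  using run unfolding is_pbm_run_def by auto

lemma fmle: "fm k y \<le> f y"
proof (cases k)
  case 0 thus ?thesis using fm0 subg_ineq by simp
next
  case (Suc j) thus ?thesis using fmle_suc by simp
qed

end


context pbm begin

lemma null_step_gain:
  fixes j :: nat and X :: 'a and lo :: real
  assumes nd: "\<not> desc j" and xj: "x j = X"
    and lo: "lo \<le> f X - (fm j (z (Suc j)) + \<rho>/2 * (norm (z (Suc j) - X))\<^sup>2)"
  shows "f X - (fm (Suc j) (z (Suc (Suc j))) + \<rho>/2 * (norm (z (Suc (Suc j)) - X))\<^sup>2)
     \<le> f X - (fm j (z (Suc j)) + \<rho>/2 * (norm (z (Suc j) - X))\<^sup>2) - \<rho> / (2 * (\<rho> + 4 * L)) * (1 - \<beta>) * lo"
proof -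
  define zz where "zz = z (Suc j)"
  define z' where "z' = z (Suc (Suc j))"
  define e where "e = f zz - fm j zz"
  define \<phi> where "\<phi> = fm j zz + \<rho>/2 * (norm (zz - X))\<^sup>2"
  define \<phi>' where "\<phi>' = fm (Suc j) z' + \<rho>/2 * (norm (z' - X))\<^sup>2"
  define s where "s = \<rho> *\<^sub>R (X - zz)"
  define w where "w = grad zz - s"
  define d where "d = z' - zz"
  define \<theta> where "\<theta> = \<rho> / (\<rho> + 4 * L)"
  have L0': "L \<ge> 0" by (rule L0)
  have th: "0 < \<theta>" "\<theta> \<le> 1" using rho L0' by (auto simp: \<theta>_def field_simps)
  have nullc: "f X - f zz < \<beta> * (f X - fm j zz)"
    using nd xj unfolding pbm_descent_def zz_def by simp
  have sq0: "\<rho>/2 * (norm (zz - X))\<^sup>2 \<ge> 0" using rho by simp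
  have e1: "e \<ge> (1 - \<beta>) * (f X - \<phi>)"
  proof -
    have "e > (1 - \<beta>) * (f X - fm j zz)" using nullc unfolding e_def by (simp add: algebra_simps)
    moreover have "(1 - \<beta>) * (f X - fm j zz) \<ge> (1 - \<beta>) * (f X - \<phi>)"
      using beta sq0 unfolding \<phi>_def by (intro mult_left_mono) auto
    ultimately show ?thesis by simp
  qed
  have popt: "fm j y \<ge> fm j zz + inner s (y - zz)" for y
    using prox_opt[OF fmcvx[of j], of zz \<rho> X y] opt[of j] rho xj unfolding s_def zz_def by auto
  have wbound: "(norm w)\<^sup>2 \<le> 4 * L * e"
  proof -
    have "\<forall>d. inner (s - grad zz) d \<le> e + L * (norm d)\<^sup>2"
    proof
      fix d
      have "f (zz + d) \<ge> fm j (zz + d)" by (rule fmle)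
      moreover have "fm j (zz + d) \<ge> fm j zz + inner s d" using popt[of "zz + d"] by simp
      moreover have "f (zz + d) \<le> f zz + inner (grad zz) d + L * (norm d)\<^sup>2" using smooth[of "zz + d" zz] by simp
      ultimately show "inner (s - grad zz) d \<le> e + L * (norm d)\<^sup>2" unfolding e_def by (simp add: inner_diff_left)
    qed
    from eps_subgrad[OF this L0'] show ?thesis unfolding w_def by (simp add: norm_minus_commute)
  qed
  have fm1: "fm (Suc j) z' \<ge> (1 - \<theta>) * (fm j zz + inner s d) + \<theta> * (f zz + inner (grad zz) d)"
  proof -
    have a: "fm (Suc j) z' \<ge> fm j zz + inner s d" using agg[OF nd, of z'] xj unfolding s_def zz_def d_def by simp
    have b: "fm (Suc j) z' \<ge> f zz + inner (grad zz) d" using cut[of j z'] g_eq unfolding zz_def d_def by simp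
    have "(1 - \<theta>) * (fm j zz + inner s d) \<le> (1 - \<theta>) * fm (Suc j) z'" using a th by (intro mult_left_mono) auto
    moreover have "\<theta> * (f zz + inner (grad zz) d) \<le> \<theta> * fm (Suc j) z'" using b th by (intro mult_left_mono) auto
    ultimately show ?thesis by (simp add: algebra_simps)
  qed
  have nz': "(norm (z' - X))\<^sup>2 = (norm (zz - X))\<^sup>2 + 2 * inner (zz - X) d + (norm d)\<^sup>2"
    using norm_add_scale[of "zz - X" 1 d] unfolding d_def by simp
  have sd: "inner s d = - \<rho> * inner (zz - X) d"
    unfolding s_def by (simp add: inner_diff_left inner_diff_right algebra_simps)
  have phi': "\<phi>' \<ge> \<phi> + \<theta> * e + \<theta> * inner w d + \<rho>/2 * (norm d)\<^sup>2"
  proof -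
    have "\<phi>' \<ge> (1 - \<theta>) * (fm j zz + inner s d) + \<theta> * (f zz + inner (grad zz) d) + \<rho>/2 * (norm (z' - X))\<^sup>2"
      using fm1 unfolding \<phi>'_def by simp
    moreover have "(1 - \<theta>) * (fm j zz + inner s d) + \<theta> * (f zz + inner (grad zz) d) + \<rho>/2 * (norm (z' - X))\<^sup>2
        = \<phi> + \<theta> * e + \<theta> * inner w d + \<rho>/2 * (norm d)\<^sup>2"
      unfolding nz' \<phi>_def e_def w_def inner_diff_left
      using sd by (simp add: algebra_simps)
    ultimately show ?thesis by simp
  qed
  have sqr: "\<theta> * inner w d + \<rho>/2 * (norm d)\<^sup>2 \<ge> - \<theta>\<^sup>2 * (norm w)\<^sup>2 / (2 * \<rho>)"
  proof -
    have "0 \<le> (norm (\<theta> *\<^sub>R w + \<rho> *\<^sub>R d))\<^sup>2" by simp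
    also have "\<dots> = \<theta>\<^sup>2 * (norm w)\<^sup>2 + 2 * \<theta> * \<rho> * inner w d + \<rho>\<^sup>2 * (norm d)\<^sup>2"
      unfolding power2_norm_eq_inner
      by (simp add: inner_add_left inner_add_right inner_commute power2_eq_square algebra_simps)
    finally have "0 \<le> \<theta>\<^sup>2 * (norm w)\<^sup>2 + 2 * \<theta> * \<rho> * inner w d + \<rho>\<^sup>2 * (norm d)\<^sup>2" .
    hence "0 \<le> (\<theta>\<^sup>2 * (norm w)\<^sup>2 + 2 * \<theta> * \<rho> * inner w d + \<rho>\<^sup>2 * (norm d)\<^sup>2) / (2 * \<rho>)"
      using rho by simp
    also have "\<dots> = \<theta>\<^sup>2 * (norm w)\<^sup>2 / (2 * \<rho>) + (\<theta> * inner w d + \<rho>/2 * (norm d)\<^sup>2)"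
      using rho by (simp add: field_simps power2_eq_square)
    finally show ?thesis by simp
  qed
  have wb2: "\<theta>\<^sup>2 * (norm w)\<^sup>2 / (2 * \<rho>) \<le> \<theta>\<^sup>2 * (4 * L * e) / (2 * \<rho>)"
    using wbound rho by (intro divide_right_mono mult_left_mono) auto
  have e0: "e \<ge> 0"
  proof -
    have "fm j X \<le> f X" by (rule fmle)
    have "\<phi> \<le> fm j X + \<rho>/2 * (norm (X - X))\<^sup>2" using opt[of j X] xj unfolding \<phi>_def zz_def by simp
    hence "f X - \<phi> \<ge> 0" using \<open>fm j X \<le> f X\<close> by simp
    thus ?thesis using e1 beta by (smt (verit) mult_nonneg_nonneg)
  qed
  have gain: "\<theta> * e - \<theta>\<^sup>2 * (4 * L * e) / (2 * \<rho>) \<ge> \<rho> / (2 * (\<rho> + 4 * L)) * e"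
  proof -
    have "\<theta> * e - \<theta>\<^sup>2 * (4 * L * e) / (2 * \<rho>) = \<theta> * e * (1 - 2 * \<theta> * L / \<rho>)"
      using rho by (simp add: field_simps power2_eq_square)
    also have "1 - 2 * \<theta> * L / \<rho> = (\<rho> + 2 * L) / (\<rho> + 4 * L)"
    proof -
      have pos: "\<rho> + 4 * L > 0" using rho L0' by simp
      have "2 * \<theta> * L / \<rho> = 2 * L / (\<rho> + 4 * L)" using rho by (simp add: \<theta>_def)
      moreover have "1 - 2 * L / (\<rho> + 4 * L) = (\<rho> + 2 * L) / (\<rho> + 4 * L)" using pos by (simp add: field_simps)
      ultimately show ?thesis by simp
    qed
    also have "\<theta> * e * ((\<rho> + 2 * L) / (\<rho> + 4 * L)) \<ge> \<theta> * e * (1/2)"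
      using rho L0' e0 th by (intro mult_left_mono) (auto simp: field_simps)
    finally have X: "\<theta> * e * (1/2) \<le> \<theta> * e - \<theta>\<^sup>2 * (4 * L * e) / (2 * \<rho>)" .
    have "\<rho> / (2 * (\<rho> + 4 * L)) * e = \<theta> * e * (1/2)" unfolding \<theta>_def by simp
    with X show ?thesis by linarith
  qed
  have c0: "\<rho> / (2 * (\<rho> + 4 * L)) \<ge> 0" using rho L0' by simp
  have elo: "e \<ge> (1 - \<beta>) * lo"
    using e1 lo beta unfolding \<phi>_def zz_def by (smt (verit) mult_left_mono)
  have "\<phi>' \<ge> \<phi> + \<rho> / (2 * (\<rho> + 4 * L)) * e" using phi' sqr wb2 gain by linarith
  moreover have "\<rho> / (2 * (\<rho> + 4 * L)) * e \<ge> \<rho> / (2 * (\<rho> + 4 * L)) * ((1 - \<beta>) * lo)"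
    using elo c0 by (rule mult_left_mono)
  ultimately have "\<phi>' \<ge> \<phi> + \<rho> / (2 * (\<rho> + 4 * L)) * (1 - \<beta>) * lo" by simp
  thus ?thesis unfolding \<phi>'_def \<phi>_def zz_def z'_def by simp
qed

end


lemma arith_final:
  fixes m Q \<rho> L \<beta> :: real
  assumes Q: "Q > 0" and rho: "\<rho> > 0" and L: "L \<ge> 0" and b: "\<beta> < 1"
    and h: "m * (\<rho> / (2 * (\<rho> + 4 * L))) * (1 - \<beta>) * (Q / (2 * (2 * L + \<rho>))) \<le> Q / (2 * \<rho>) - Q / (2 * (2 * L + \<rho>))"
  shows "m \<le> 4 * L * (\<rho> + 4 * L) / ((1 - \<beta>) * \<rho>\<^sup>2)"
proof -
  define K where "K = 2 * L + \<rho>"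
  define M where "M = \<rho> + 4 * L"
  have p1: "M > 0" "K > 0" "1 - \<beta> > 0" using rho L b by (auto simp: K_def M_def)
  have h': "m * (\<rho> / (2 * M)) * (1 - \<beta>) * (Q / (2 * K)) \<le> Q / (2 * \<rho>) - Q / (2 * K)"
    using h unfolding K_def M_def .
  have KL: "K - \<rho> = 2 * L" unfolding K_def by simp
  have "Q / (2 * \<rho>) - Q / (2 * K) = Q * (K - \<rho>) / (2 * \<rho> * K)"
    using p1 rho by (simp add: field_simps)
  also have "\<dots> = Q * L / (\<rho> * K)" unfolding KL using p1 rho by (simp add: field_simps)
  finally have e1: "Q / (2 * \<rho>) - Q / (2 * K) = Q * L / (\<rho> * K)" .
  have e2: "m * (\<rho> / (2 * M)) * (1 - \<beta>) * (Q / (2 * K))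
     = (m * \<rho> * (1 - \<beta>) / (4 * M)) * (Q / K)"
    using p1 by (simp add: field_simps)
  have "(m * \<rho> * (1 - \<beta>) / (4 * M)) * (Q / K) \<le> (L / \<rho>) * (Q / K)"
    using h' unfolding e1 e2 using p1 rho by (simp add: field_simps)
  note hh = this
  have "m * \<rho> * (1 - \<beta>) / (4 * M) \<le> L / \<rho>"
    using mult_right_le_imp_le[OF hh] Q p1 by simp
  hence "m * \<rho> * (1 - \<beta>) \<le> L / \<rho> * (4 * M)" using p1 by (simp add: pos_divide_le_eq)
  hence "m * ((1 - \<beta>) * \<rho>\<^sup>2) \<le> 4 * L * M" using rho by (simp add: field_simps power2_eq_square)
  thus ?thesis using p1 rho unfolding M_def by (simp add: pos_le_divide_eq)
qed

context pbm begin

lemma null_run: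
  assumes start: "s = 0 \<or> (\<exists>d. s = Suc d \<and> desc d)"
    and nonmin: "f p < f (x s)"
    and nulls: "\<forall>i<m. \<not> desc (s+i)"
  shows "real m \<le> 4 * L * (\<rho> + 4 * L) / ((1 - \<beta>) * \<rho>\<^sup>2)"
proof -
  define X where "X = x s"
  define G where "G = grad X"
  define Q where "Q = (norm G)\<^sup>2"
  define lo where "lo = Q / (2 * (2 * L + \<rho>))"
  define c where "c = \<rho> / (2 * (\<rho> + 4 * L))"
  define \<Delta> where "\<Delta> i = f X - (fm (s+i) (z (Suc (s+i))) + \<rho>/2 * (norm (z (Suc (s+i)) - X))\<^sup>2)" for i
  have L0': "L \<ge> 0" by (rule L0)
  have hx: "i \<le> m \<Longrightarrow> x (s+i) = X" for i
  proof (induction i)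
    case 0 thus ?case by (simp add: X_def)
  next
    case (Suc i)
    hence "\<not> desc (s+i)" using nulls by simp
    thus ?case using Suc xsuc[of "s+i"] by simp
  qed
  have Gne: "G \<noteq> 0"
  proof
    assume "G = 0"
    thus False using grad_ineq[of X p] nonmin unfolding G_def X_def by simp
  qed
  hence Qpos: "Q > 0" unfolding Q_def by simp
  have cut0: "fm s y \<ge> f X + inner G (y - X)" for y
    using start
  proof
    assume "s = 0" thus ?thesis using fm0 g_eq unfolding X_def G_def by simp
  next
    assume "\<exists>d. s = Suc d \<and> desc d"
    then obtain d where d: "s = Suc d" "desc d" by blast
    hence "x s = z s" using xsuc[of d] by simp
    thus ?thesis using cut[of d y] g_eq d unfolding X_def G_def by simp
  qed
  have lo_le: "lo \<le> \<Delta> i" if i: "i \<le> m" for i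
  proof -
    define y where "y = X - (1 / (2 * L + \<rho>)) *\<^sub>R G"
    have pos: "2 * L + \<rho> > 0" using L0' rho by simp
    have "fm (s+i) (z (Suc (s+i))) + \<rho>/2 * (norm (z (Suc (s+i)) - X))\<^sup>2 \<le> fm (s+i) y + \<rho>/2 * (norm (y - X))\<^sup>2"
      using opt[of "s+i" y] hx[OF i] by simp
    also have "\<dots> \<le> f y + \<rho>/2 * (norm (y - X))\<^sup>2" using fmle by simp
    also have "\<dots> \<le> f X + inner G (y - X) + (L + \<rho>/2) * (norm (y - X))\<^sup>2"
      using smooth[of y X] unfolding G_def by (simp add: algebra_simps)
    also have "inner G (y - X) = - Q / (2 * L + \<rho>)"
      unfolding y_def Q_def by (simp add: power2_norm_eq_inner)
    also have "(norm (y - X))\<^sup>2 = Q / (2 * L + \<rho>)\<^sup>2"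
      unfolding y_def Q_def using pos by (simp add: power_divide)
    also have "f X + - Q / (2 * L + \<rho>) + (L + \<rho> / 2) * (Q / (2 * L + \<rho>)\<^sup>2) = f X - lo"
    proof -
      define K where "K = 2 * L + \<rho>"
      have K: "K > 0" "L + \<rho>/2 = K/2" using pos by (auto simp: K_def)
      have "f X + - Q / K + K/2 * (Q / K\<^sup>2) = f X - Q / (2 * K)"
        using K by (simp add: field_simps power2_eq_square)
      thus ?thesis unfolding lo_def K_def[symmetric] K(2) .
    qed
    finally show ?thesis unfolding \<Delta>_def by simp
  qed
  have up: "\<Delta> 0 \<le> Q / (2 * \<rho>)"
  proof -
    define v where "v = z (Suc s) - X"
    have "0 \<le> (norm (G + \<rho> *\<^sub>R v))\<^sup>2" by simp
    also have "\<dots> = Q + 2 * \<rho> * inner G v + \<rho>\<^sup>2 * (norm v)\<^sup>2"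
      unfolding Q_def power2_norm_eq_inner
      by (simp add: inner_add_left inner_add_right inner_commute power2_eq_square algebra_simps)
    finally have "- Q / (2 * \<rho>) \<le> inner G v + \<rho>/2 * (norm v)\<^sup>2"
      using rho by (simp add: field_simps power2_eq_square)
    moreover have "fm s (z (Suc s)) \<ge> f X + inner G v" using cut0 unfolding v_def .
    ultimately show ?thesis unfolding \<Delta>_def v_def by simp
  qed
  have step: "\<Delta> (Suc i) \<le> \<Delta> i - c * (1 - \<beta>) * lo" if i: "i < m" for i
  proof -
    have nd: "\<not> desc (s+i)" using nulls i by simp
    have hxi: "x (s+i) = X" using hx[of i] i by simp
    have loi: "lo \<le> f X - (fm (s+i) (z (Suc (s+i))) + \<rho>/2 * (norm (z (Suc (s+i)) - X))\<^sup>2)"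
      using lo_le[of i] i unfolding \<Delta>_def by simp
    from null_step_gain[OF nd hxi loi]
    show ?thesis unfolding \<Delta>_def c_def by simp
  qed
  have tele: "i \<le> m \<Longrightarrow> \<Delta> i \<le> \<Delta> 0 - real i * (c * (1 - \<beta>) * lo)" for i
  proof (induction i)
    case 0 thus ?case by simp
  next
    case (Suc i)
    hence "\<Delta> (Suc i) \<le> \<Delta> i - c * (1 - \<beta>) * lo" using step by simp
    with Suc show ?case by (simp add: algebra_simps)
  qed
  have "real m * (c * (1 - \<beta>) * lo) \<le> Q / (2 * \<rho>) - lo"
    using tele[of m] lo_le[of m] up by simp
  hence "real m * c * (1 - \<beta>) * lo \<le> Q / (2 * \<rho>) - lo" by (simp add: mult.assoc)
  thus ?thesis using arith_final[OF Qpos rho L0' beta(2)] unfolding c_def lo_def by simp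
qed

end


lemma fin_card_bound:
  assumes "\<And>F. finite F \<Longrightarrow> F \<subseteq> P \<Longrightarrow> real (card F) \<le> B"
  shows "finite P \<and> real (card P) \<le> B"
proof -
  have "finite P"
  proof (rule ccontr)
    assume "infinite P"
    obtain n :: nat where n: "real n > B" using reals_Archimedean2 by blast
    obtain F where "finite F" "card F = n" "F \<subseteq> P" using infinite_arbitrarily_large[OF \<open>infinite P\<close>] by blast
    thus False using assms n by fastforce
  qed
  thus ?thesis using assms by blast
qed

lemma card_le_Max_count:
  fixes F P :: "nat set"
  assumes "finite F" "F \<noteq> {}" "F \<subseteq> P"
  shows "card F \<le> card (P \<inter> {..<Max F}) + 1"
proof -
  have "F \<subseteq> insert (Max F) (P \<inter> {..<Max F})"
    using assms by (auto simp: order.not_eq_order_implies_strict)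
  moreover have "finite (P \<inter> {..<Max F})" using finite_lessThan by blast
  ultimately have "card F \<le> card (insert (Max F) (P \<inter> {..<Max F}))" by (intro card_mono) auto
  also have "\<dots> \<le> card (P \<inter> {..<Max F}) + 1" by (simp add: card_insert_if)
  finally show ?thesis .
qed

lemma count_insert: "card (P \<inter> {..<Suc k}) = (if k \<in> P then card (P \<inter> {..<k}) + 1 else card (P \<inter> {..<k}))"
proof -
  have "P \<inter> {..<Suc k} = (if k \<in> P then insert k (P \<inter> {..<k}) else P \<inter> {..<k})"
    by (auto simp: lessThan_Suc)
  thus ?thesis by (simp add: card_insert_if)
qed

lemma count1:
  fixes a :: "nat \<Rightarrow> real"
  assumes mono: "\<And>k. a (Suc k) \<le> a k"
    and step: "\<And>k. k \<in> P \<Longrightarrow> a (Suc k) \<le> (1 - \<beta>/2) * a k"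
    and Pr: "\<And>k. k \<in> P \<Longrightarrow> a k > r"
    and r: "r > 0" and a0: "a 0 > 0" and b: "0 < \<beta>" "\<beta> < 1"
  shows "finite P \<and> real (card P) \<le> real_of_int (ceil_plus (2 * ln (a 0 / r) / \<beta>))"
proof (rule fin_card_bound)
  define q where "q = 1 - \<beta>/2"
  have q: "0 < q" "q < 1" using b by (auto simp: q_def)
  define c where "c k = card (P \<inter> {..<k})" for k
  have pw: "a k \<le> q ^ c k * a 0" for k
  proof (induction k)
    case 0 thus ?case by (simp add: c_def)
  next
    case (Suc k)
    show ?case
    proof (cases "k \<in> P")
      case True
      have "a (Suc k) \<le> q * a k" using step[OF True] by (simp add: q_def)
      also have "\<dots> \<le> q * (q ^ c k * a 0)" using Suc q by (intro mult_left_mono) auto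
      finally show ?thesis using True by (simp add: c_def count_insert)
    next
      case False
      thus ?thesis using Suc mono[of k] by (simp add: c_def count_insert)
    qed
  qed
  fix F assume F: "finite F" "F \<subseteq> P"
  show "real (card F) \<le> real_of_int (ceil_plus (2 * ln (a 0 / r) / \<beta>))"
  proof (cases "F = {}")
    case True thus ?thesis by (simp add: ceil_plus_def)
  next
    case False
    define k where "k = Max F"
    have kP: "k \<in> P" using F False by (simp add: k_def subset_iff)
    have cF: "card F \<le> c k + 1" using card_le_Max_count[OF F(1) False F(2)] by (simp add: c_def k_def)
    have "r < q ^ c k * a 0" using Pr[OF kP] pw[of k] by simp
    hence "r / a 0 < q ^ c k" using a0 by (simp add: field_simps)
    hence "ln (r / a 0) < ln (q ^ c k)" using r a0 q by simp
    also have "\<dots> = real (c k) * ln q" by (rule ln_realpow)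
    also have "\<dots> \<le> real (c k) * (- \<beta>/2)"
    proof -
      have "ln q \<le> - \<beta>/2" using ln_add_one_self_le_self2[of "-\<beta>/2"] b by (simp add: q_def)
      thus ?thesis by (intro mult_left_mono) auto
    qed
    finally have "real (c k) < 2 * ln (a 0 / r) / \<beta>"
      using b r a0 by (simp add: ln_div field_simps)
    hence "int (c k) < \<lceil>2 * ln (a 0 / r) / \<beta>\<rceil>" by (simp add: less_ceiling_iff)
    hence "int (card F) \<le> \<lceil>2 * ln (a 0 / r) / \<beta>\<rceil>" using cF by linarith
    thus ?thesis by (simp add: ceil_plus_def)
  qed
qed

lemma step2_arith:
  fixes A u u' R \<beta> :: real
  assumes "A * u \<le> R" "0 < u" "u \<le> R" "A \<ge> 0" "0 < \<beta>" "\<beta> < 1"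
    and "u' \<le> u - \<beta> * u\<^sup>2 / (2 * R)"
  shows "(A + \<beta>/2) * u' \<le> R"
proof -
  have R: "R > 0" using assms by simp
  have "(A + \<beta>/2) * u' \<le> (A + \<beta>/2) * (u - \<beta> * u\<^sup>2 / (2 * R))"
    using assms by (intro mult_left_mono) auto
  also have "\<dots> = A * u + (\<beta> * u / (2 * R)) * (R - A * u) - \<beta>\<^sup>2 * u\<^sup>2 / (4 * R)"
    using R by (simp add: field_simps power2_eq_square)
  also have "\<dots> \<le> A * u + 1 * (R - A * u)"
  proof -
    have "\<beta> * u \<le> 1 * u" using assms by (intro mult_right_mono) auto
    hence "\<beta> * u \<le> 2 * R" using assms by linarith
    hence "\<beta> * u / (2 * R) \<le> 1" using R by (simp add: field_simps)
    hence "(\<beta> * u / (2 * R)) * (R - A * u) \<le> 1 * (R - A * u)"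
      using assms by (intro mult_right_mono) auto
    moreover have "\<beta>\<^sup>2 * u\<^sup>2 / (4 * R) \<ge> 0" using R by simp
    ultimately show ?thesis by linarith
  qed
  finally show ?thesis by simp
qed

lemma count2:
  fixes a :: "nat \<Rightarrow> real"
  assumes mono: "\<And>k. a (Suc k) \<le> a k"
    and step: "\<And>k. k \<in> P \<Longrightarrow> a (Suc k) \<le> a k - \<beta> * (a k)\<^sup>2 / (2 * R)"
    and Pr: "\<And>k. k \<in> P \<Longrightarrow> \<epsilon> < a k \<and> a k \<le> R"
    and e: "\<epsilon> > 0" and b: "0 < \<beta>" "\<beta> < 1" and R: "R > 0"
  shows "finite P \<and> real (card P) \<le> 2 * R / (\<beta> * \<epsilon>)"
proof (rule fin_card_bound)
  define c where "c k = card (P \<inter> {..<k})" for k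
  have inv: "c k > 0 \<longrightarrow> (1 + \<beta>/2 * c k) * a k \<le> R" for k
  proof (induction k)
    case 0 thus ?case by (simp add: c_def)
  next
    case (Suc k)
    show ?case
    proof (cases "k \<in> P")
      case True
      have h0: "(1 + \<beta>/2 * c k) * a k \<le> R"
      proof (cases "c k > 0")
        case True thus ?thesis using Suc by simp
      next
        case False thus ?thesis using Pr[OF \<open>k \<in> P\<close>] by simp
      qed
      have "(1 + \<beta>/2 * c k + \<beta>/2) * a (Suc k) \<le> R"
        using step2_arith[OF h0 _ _ _ b step[OF True]] Pr[OF True] e b by auto
      thus ?thesis using True by (simp add: c_def count_insert algebra_simps)
    next
      case False
      hence ck: "c (Suc k) = c k" by (simp add: c_def count_insert)
      show ?thesis
      proof
        assume "0 < c (Suc k)"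
        hence "(1 + \<beta>/2 * c k) * a k \<le> R" using Suc ck by simp
        moreover have "(1 + \<beta>/2 * c k) * a (Suc k) \<le> (1 + \<beta>/2 * c k) * a k"
          using mono[of k] b by (intro mult_left_mono) auto
        ultimately show "(1 + \<beta>/2 * c (Suc k)) * a (Suc k) \<le> R" using ck by simp
      qed
    qed
  qed
  fix F assume F: "finite F" "F \<subseteq> P"
  show "real (card F) \<le> 2 * R / (\<beta> * \<epsilon>)"
  proof (cases "F = {}")
    case True
    thus ?thesis using R b e by simp
  next
    case False
    define k where "k = Max F"
    have kP: "k \<in> P" using F False by (simp add: k_def subset_iff)
    have cF: "card F \<le> c k + 1" using card_le_Max_count[OF F(1) False F(2)] by (simp add: c_def k_def)
    have h: "(1 + \<beta>/2 * c k) * a k \<le> R"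
    proof (cases "c k > 0")
      case True thus ?thesis using inv by simp
    next
      case False thus ?thesis using Pr[OF kP] by simp
    qed
    have "(1 + \<beta>/2 * c k) * \<epsilon> < (1 + \<beta>/2 * c k) * a k"
      using Pr[OF kP] b by (intro mult_strict_left_mono) (auto intro: add_pos_nonneg)
    hence lt: "(1 + \<beta>/2 * c k) * \<epsilon> < R" using h by simp
    have "real (card F) \<le> real (c k) + 1" using cF by simp
    also have "\<dots> \<le> 2 * R / (\<beta> * \<epsilon>)"
    proof -
      have "\<epsilon> + \<beta>/2 * c k * \<epsilon> < R" using lt by (simp add: algebra_simps)
      moreover have "\<beta> * \<epsilon> \<le> 2 * \<epsilon>" using b e by (intro mult_right_mono) auto
      ultimately have "\<beta> * \<epsilon> * (real (c k) + 1) \<le> 2 * R"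
        by (simp add: algebra_simps)
      thus ?thesis using b e by (simp add: field_simps)
    qed
    finally show ?thesis .
  qed
qed



lemma K_bound:
  fixes L \<beta> \<rho> :: real
  assumes L: "L \<ge> 0" and rho: "\<rho> > 0" and b: "0 < \<beta>" "\<beta> < 1"
  shows "4 * L * (\<rho> + 4 * L) / ((1 - \<beta>) * \<rho>\<^sup>2) \<le> 16 * (L + \<rho>)^3 / ((1 - \<beta>)^2 * \<rho>^3)"
proof -
  have b1: "0 < 1 - \<beta>" "1 - \<beta> \<le> 1" using b by auto
  have "4 * L * (\<rho> + 4 * L) * \<rho> \<le> 16 * (L + \<rho>)^3"
  proof -
    have "4 * L * (\<rho> + 4 * L) * \<rho> = 4 * L * \<rho>^2 + 16 * L^2 * \<rho>" by (simp add: power2_eq_square algebra_simps)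
    also have "\<dots> \<le> 16 * (L^3 + 3 * L^2 * \<rho> + 3 * L * \<rho>^2 + \<rho>^3)"
      using L rho by (simp add: algebra_simps)
    also have "\<dots> = 16 * (L + \<rho>)^3" by (simp add: power3_eq_cube power2_eq_square algebra_simps)
    finally show ?thesis .
  qed
  also have "\<dots> \<le> 16 * (L + \<rho>)^3 / (1 - \<beta>)"
    using b1 L rho by (simp add: le_divide_eq)
  finally have h: "4 * L * (\<rho> + 4 * L) * \<rho> \<le> 16 * (L + \<rho>)^3 / (1 - \<beta>)" .
  have "4 * L * (\<rho> + 4 * L) / ((1 - \<beta>) * \<rho>\<^sup>2) = (4 * L * (\<rho> + 4 * L) * \<rho>) / ((1 - \<beta>) * \<rho>^3)"
    using rho by (simp add: power2_eq_square power3_eq_cube)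
  also have "\<dots> \<le> (16 * (L + \<rho>)^3 / (1 - \<beta>)) / ((1 - \<beta>) * \<rho>^3)"
    using h b1 rho by (intro divide_right_mono) auto
  also have "\<dots> = 16 * (L + \<rho>)^3 / ((1 - \<beta>)^2 * \<rho>^3)" by (simp add: power2_eq_square)
  finally show ?thesis .
qed

theorem theorem2:
  fixes f :: "'a::euclidean_space \<Rightarrow> real"
    and grad g :: "'a \<Rightarrow> 'a"
    and L \<beta> \<rho> \<epsilon> D2 :: real
    and x z :: "nat \<Rightarrow> 'a"
    and fm :: "nat \<Rightarrow> 'a \<Rightarrow> real"
  assumes cvx: "convex_on UNIV f"
    and grad: "\<forall>y. (f has_derivative (\<lambda>h. inner (grad y) h)) (at y)"
    and lip: "\<forall>u v. norm (grad u - grad v) \<le> L * norm (u - v)"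
    and Xne: "{y. f y = Inf (range f)} \<noteq> {}"
    and subg: "\<forall>y. g y \<in> subdiff f y"
    and beta: "0 < \<beta>" "\<beta> < 1"
    and rho: "\<rho> > 0"
    and run: "is_pbm_run f g \<beta> \<rho> x z fm"
    and Dbdd: "bdd_above (range (\<lambda>k. (infdist (x k) {y. f y = Inf (range f)})\<^sup>2))"
    and Ddef: "D2 = (SUP k. (infdist (x k) {y. f y = Inf (range f)})\<^sup>2)"
    and Dpos: "D2 > 0"
    and eps: "0 < \<epsilon>" "\<epsilon> \<le> f (x 0) - Inf (range f)"
  shows "let N = 2 * \<rho> * D2 / (\<beta> * \<epsilon>)
                 + real_of_int (ceil_plus (2 * ln ((f (x 0) - Inf (range f)) / (\<rho> * D2)) / \<beta>));
             Desc = {k. f (x k) - Inf (range f) > \<epsilon> \<and> pbm_descent f \<beta> x z fm k};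
             Null = {k. f (x k) - Inf (range f) > \<epsilon> \<and> \<not> pbm_descent f \<beta> x z fm k}
         in finite Desc \<and> real (card Desc) \<le> N \<and>
            finite Null \<and> real (card Null) \<le> 16 * (L + \<rho>)^3 / ((1 - \<beta>)^2 * \<rho>^3) * (N + 1)"
proof -
  interpret pbm f grad g L \<beta> \<rho> x z fm
    using cvx grad lip subg beta rho run by unfold_locales
  define cs where "cs = Inf (range f)"
  define Xs where "Xs = {y. f y = cs}"
  define a where "a k = f (x k) - cs" for k
  define N where "N = 2 * \<rho> * D2 / (\<beta> * \<epsilon>)
                 + real_of_int (ceil_plus (2 * ln ((f (x 0) - Inf (range f)) / (\<rho> * D2)) / \<beta>))"
  define Desc where "Desc = {k. f (x k) - Inf (range f) > \<epsilon> \<and> desc k}"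
  define Null where "Null = {k. f (x k) - Inf (range f) > \<epsilon> \<and> \<not> desc k}"
  have R: "\<rho> * D2 > 0" using rho Dpos by simp
  have contf: "continuous_on UNIV f"
    using grad by (meson has_derivative_continuous continuous_at_imp_continuous_on)
  have closedX: "closed Xs" unfolding Xs_def by (rule closed_Collect_eq[OF contf]) simp
  have XsNE: "Xs \<noteq> {}" using Xne unfolding Xs_def cs_def .
  have near: "\<exists>p. f p = cs \<and> (norm (p - x k))\<^sup>2 \<le> D2" for k
  proof -
    obtain p where p: "p \<in> Xs" "infdist (x k) Xs = dist (x k) p"
      using infdist_attains_inf[OF closedX XsNE] by blast
    have "(infdist (x k) Xs)\<^sup>2 \<le> D2" unfolding Ddef Xs_def cs_def
      by (rule cSUP_upper[OF _ Dbdd]) simp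
    thus ?thesis using p by (auto simp: Xs_def dist_norm norm_minus_commute)
  qed
  have gap_y: "f (x k) - fm k (z (Suc k)) \<ge> f (x k) - f y - \<rho>/2 * (norm (y - x k))\<^sup>2" for k y
  proof -
    have "fm k (z (Suc k)) \<le> fm k y + \<rho> / 2 * (norm (y - x k))\<^sup>2"
      using opt[of k y] rho by (smt (verit) zero_le_power2 mult_nonneg_nonneg divide_nonneg_pos)
    thus ?thesis using fmle[of k y] by simp
  qed
  have desc_gap: "a (Suc k) \<le> a k - \<beta> * (f (x k) - fm k (z (Suc k)))" if "desc k" for k
    using that xsuc[of k] unfolding a_def pbm_descent_def by simp
  have mono: "a (Suc k) \<le> a k" for k
  proof (cases "desc k")
    case True
    have "f (x k) - fm k (z (Suc k)) \<ge> 0" using gap_y[of k "x k"] by simp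
    thus ?thesis using desc_gap[OF True] beta by (smt (verit) mult_nonneg_nonneg)
  next
    case False thus ?thesis using xsuc[of k] by (simp add: a_def)
  qed
  have monoG: "k \<le> k' \<Longrightarrow> a k' \<le> a k" for k k'
    using lift_Suc_antimono_le[of a, OF mono] by blast
  define P1 where "P1 = {k. desc k \<and> a k > \<rho> * D2}"
  define P2 where "P2 = {k. desc k \<and> \<epsilon> < a k \<and> a k \<le> \<rho> * D2}"
  have step1: "a (Suc k) \<le> (1 - \<beta>/2) * a k" if "k \<in> P1" for k
  proof -
    obtain p where p: "f p = cs" "(norm (p - x k))\<^sup>2 \<le> D2" using near by blast
    have "f (x k) - fm k (z (Suc k)) \<ge> a k - \<rho>/2 * D2"
      using gap_y[of k p] p rho unfolding a_def by (smt (verit) mult_left_mono divide_nonneg_pos)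
    also have "a k - \<rho>/2 * D2 \<ge> a k / 2" using that unfolding P1_def by simp
    finally have "f (x k) - fm k (z (Suc k)) \<ge> a k / 2" .
    hence "\<beta> * (f (x k) - fm k (z (Suc k))) \<ge> \<beta> * (a k / 2)" using beta by (intro mult_left_mono) auto
    thus ?thesis using desc_gap[of k] that unfolding P1_def by (simp add: algebra_simps)
  qed
  have step2: "a (Suc k) \<le> a k - \<beta> * (a k)\<^sup>2 / (2 * (\<rho> * D2))" if "k \<in> P2" for k
  proof -
    obtain p where p: "f p = cs" "(norm (p - x k))\<^sup>2 \<le> D2" using near by blast
    have ak: "\<epsilon> < a k" "a k \<le> \<rho> * D2" "desc k" using that unfolding P2_def by auto
    define t where "t = a k / (\<rho> * D2)"
    have t: "0 \<le> t" "t \<le> 1" using ak eps R by (auto simp: t_def)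
    define y where "y = (1 - t) *\<^sub>R x k + t *\<^sub>R p"
    have fy: "f y \<le> (1 - t) * f (x k) + t * f p"
      unfolding y_def using convex_onD[OF cvx t] by simp
    have yx: "y - x k = t *\<^sub>R (p - x k)" by (simp add: y_def algebra_simps)
    have ny: "(norm (y - x k))\<^sup>2 \<le> t\<^sup>2 * D2"
      unfolding yx using p t by (simp add: power_mult_distrib mult_left_mono)
    have "f (x k) - fm k (z (Suc k)) \<ge> f (x k) - f y - \<rho>/2 * (norm (y - x k))\<^sup>2" by (rule gap_y)
    moreover have "\<rho>/2 * (norm (y - x k))\<^sup>2 \<le> \<rho>/2 * (t\<^sup>2 * D2)" using ny rho by simp
    moreover have "f (x k) - f y \<ge> t * a k" using fy p unfolding a_def by (simp add: algebra_simps)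
    ultimately have "f (x k) - fm k (z (Suc k)) \<ge> t * a k - \<rho>/2 * (t\<^sup>2 * D2)" by linarith
    also have "t * a k - \<rho>/2 * (t\<^sup>2 * D2) = (a k)\<^sup>2 / (2 * (\<rho> * D2))"
      using R unfolding t_def by (simp add: field_simps power2_eq_square)
    finally have "\<beta> * (f (x k) - fm k (z (Suc k))) \<ge> \<beta> * ((a k)\<^sup>2 / (2 * (\<rho> * D2)))"
      using beta by (intro mult_left_mono) auto
    thus ?thesis using desc_gap[OF ak(3)] by simp
  qed
  have a0: "a 0 > 0" using eps unfolding a_def cs_def by simp
  have C1: "finite P1 \<and> real (card P1) \<le> real_of_int (ceil_plus (2 * ln (a 0 / (\<rho> * D2)) / \<beta>))"
    by (rule count1[OF mono step1 _ R a0 beta]) (auto simp: P1_def)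
  have C2: "finite P2 \<and> real (card P2) \<le> 2 * (\<rho> * D2) / (\<beta> * \<epsilon>)"
    by (rule count2[where a=a and P=P2 and R="\<rho> * D2" and \<epsilon>=\<epsilon> and \<beta>=\<beta>, OF mono step2 _ eps(1) beta R]) (auto simp: P2_def)
  have DescSub: "Desc \<subseteq> P1 \<union> P2" unfolding Desc_def P1_def P2_def a_def cs_def by auto
  have finD: "finite Desc" using C1 C2 DescSub finite_subset by blast
  have cardD: "real (card Desc) \<le> N"
  proof -
    have "card Desc \<le> card (P1 \<union> P2)" using DescSub C1 C2 by (intro card_mono) auto
    also have "\<dots> \<le> card P1 + card P2" by (rule card_Un_le)
    finally have "real (card Desc) \<le> real (card P1) + real (card P2)" by linarith
    thus ?thesis using C1 C2 unfolding N_def a_def cs_def by (simp add: mult.assoc)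
  qed
  define B where "B = 4 * L * (\<rho> + 4 * L) / ((1 - \<beta>) * \<rho>\<^sup>2)"
  define Kc where "Kc = 16 * (L + \<rho>)^3 / ((1 - \<beta>)^2 * \<rho>^3)"
  define nB where "nB = nat \<lfloor>B\<rfloor>"
  define S where "S = insert 0 (Suc ` Desc)"
  obtain p0 where p0: "f p0 = cs" using XsNE unfolding Xs_def by auto
  have cover: "Null \<subseteq> (\<Union>s\<in>S. {s..<s+nB})"
  proof
    fix k assume k: "k \<in> Null"
    hence ak: "a k > \<epsilon>" "\<not> desc k" unfolding Null_def a_def cs_def by auto
    define J where "J = {j. j \<le> k \<and> (j = 0 \<or> (\<exists>d. j = Suc d \<and> desc d))}"
    have finJ: "finite J" unfolding J_def by (rule finite_subset[of _ "{..k}"]) auto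
    have J0: "0 \<in> J" unfolding J_def by simp
    define s where "s = Max J"
    have sJ: "s \<in> J" using finJ J0 unfolding s_def by (intro Max_in) auto
    have sk: "s \<le> k" and st: "s = 0 \<or> (\<exists>d. s = Suc d \<and> desc d)" using sJ unfolding J_def by auto
    have smax: "j \<in> J \<Longrightarrow> j \<le> s" for j using finJ unfolding s_def by simp
    have nulls: "\<forall>i<k - s + 1. \<not> desc (s+i)"
    proof (intro allI impI)
      fix i assume i: "i < k - s + 1"
      show "\<not> desc (s+i)"
      proof
        assume dd: "desc (s+i)"
        show False
        proof (cases "s + i = k")
          case True thus False using dd ak by simp
        next
          case False
          hence "Suc (s+i) \<in> J" using i dd sk unfolding J_def by auto
          thus False using smax by fastforce
        qed
      qed
    qed
    have nonmin: "f p0 < f (x s)" using monoG[OF sk] ak eps p0 unfolding a_def by simp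
    have "real (k - s + 1) \<le> B" using null_run[OF st nonmin nulls] unfolding B_def .
    hence "int (k - s + 1) \<le> \<lfloor>B\<rfloor>" by (simp add: le_floor_iff)
    hence "k - s + 1 \<le> nB" unfolding nB_def by linarith
    hence kin: "k \<in> {s..<s+nB}" using sk by auto
    have "s \<in> S"
      using st
    proof
      assume "s = 0" thus ?thesis by (simp add: S_def)
    next
      assume "\<exists>d. s = Suc d \<and> desc d"
      then obtain d where d: "s = Suc d" "desc d" by blast
      have "a d \<ge> a k" using monoG[of d k] sk d by simp
      hence "d \<in> Desc" using ak d unfolding Desc_def a_def cs_def by simp
      thus ?thesis using d by (simp add: S_def)
    qed
    thus "k \<in> (\<Union>s\<in>S. {s..<s+nB})" using kin by blast
  qed
  have finS: "finite S" using finD by (simp add: S_def)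
  have finN: "finite Null" using cover finS finite_subset by blast
  have "card Null \<le> card (\<Union>s\<in>S. {s..<s+nB})" using cover finS by (intro card_mono) auto
  also have "\<dots> \<le> (\<Sum>s\<in>S. card {s..<s+nB})" by (rule card_UN_le[OF finS])
  also have "\<dots> = card S * nB" by simp
  also have "\<dots> \<le> (card Desc + 1) * nB"
  proof -
    have "card S \<le> card (Suc ` Desc) + 1" unfolding S_def using finD by (simp add: card_insert_if)
    also have "\<dots> \<le> card Desc + 1" using card_image_le[OF finD, of Suc] by simp
    finally show ?thesis by (intro mult_right_mono) auto
  qed
  finally have cN: "real (card Null) \<le> (real (card Desc) + 1) * real nB" by (metis of_nat_1 of_nat_add of_nat_le_iff of_nat_mult)
  have B0: "B \<ge> 0" unfolding B_def using L0 rho beta by simp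
  have nBB: "real nB \<le> B" unfolding nB_def using B0 by simp
  have BK: "B \<le> Kc" unfolding B_def Kc_def by (rule K_bound[OF L0 rho beta])
  have "(real (card Desc) + 1) * real nB \<le> (N + 1) * Kc"
    using cardD nBB BK by (intro mult_mono) auto
  hence "real (card Null) \<le> Kc * (N + 1)" using cN by (simp add: mult.commute)
  thus ?thesis using finD cardD finN unfolding Let_def N_def Desc_def Null_def Kc_def by simp
qed


end
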